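(* In the supersample setting described in the context, assume the loss takes values in $[0,1]$. Then \[ \left|\mathrm{Err}\right| \leq\frac{1}{n}\sum_{i=1}^n\mathbb E_{U_i}\!\left[\mathbb{W}(P_{\Delta L_i|U_i},P_{\Delta L_i})\right]. \]
   Context: Let $\mathcal Z=\mathcal X\times\mathcal Y$ and let $\mu$ be a distribution on $\mathcal Z$. A (possibly randomized) learning algorithm $\mathcal A$ maps a training sample in $\mathcal Z^n$ to a hypothesis $W\in\mathcal W$, and $\ell:\mathcal W\times\mathcal Z\to[0,\infty)$ is a loss. For $S=(Z_1,\dots,Z_n)\sim\mu^{n}$ and $W\sim P_{W|S}$, let $L_\mu=\mathbb E_W\mathbb E_{Z'\sim\mu}[\ell(W,Z')]$ (with $Z'$ independent of $(S,W)$), $L_n=\mathbb E_{W,S}[\frac1n\sum_i\ell(W,Z_i)]$, $\mathrm{Err}=L_\mu-L_n$. Supersample: $\widetilde Z=(\widetilde Z_{i,j})_{i\in\{1,\dots,n\},j\in\{0,1\}}$ with i.i.d. entries of law $\mu$; $U=(U_1,\dots,U_n)$ uniform on $\{0,1\}^n$, independent of $\widetilde Z$; $W=\mathcal A(\widetilde Z_U)$ with $\widetilde Z_U=(\widetilde Z_{1,U_1},\dots,\widetilde Z_{n,U_n})$. Put $L_{i,j}=\ell(W,\widetilde Z_{i,j})$ and $\Delta L_i=L_{i,1}-L_{i,0}$. $\mathbb W(P,Q)=\inf_{\gamma\in\Gamma(P,Q)}\int|x-x'|\,d\gamma(x,x')$ is the order-one Wasserstein distance on $\mathbb R$ (with the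 metric $|x-x'|$), where $\Gamma(P,Q)$ is the set of couplings of $P$ and $Q$. *)

theory Defs
  imports "HOL-Probability.Probability"
begin

definition coupling :: "real measure \<Rightarrow> real measure \<Rightarrow> (real \<times> real) measure \<Rightarrow> bool" where
  "coupling P Q \<gamma> \<longleftrightarrow> prob_space \<gamma> \<and> sets \<gamma> = sets (borel \<Otimes>\<^sub>M borel)
     \<and> distr \<gamma> borel fst = P \<and> distr \<gamma> borel snd = Q"

definition wasserstein1 :: "real measure \<Rightarrow> real measure \<Rightarrow> ennreal" where
  "wasserstein1 P Q = (INF \<gamma> \<in> {\<gamma>. coupling P Q \<gamma>}. \<integral>\<^sup>+ x. ennreal \<bar>fst x - snd x\<bar> \<partial>\<gamma>)"

text \<open>Training sample S = (Z_1,...,Z_n) ~ mu^n, indices 0..n-1.\<close>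
definition sample_space :: "nat \<Rightarrow> 'z measure \<Rightarrow> (nat \<Rightarrow> 'z) measure" where
  "sample_space n M = PiM {..<n} (\<lambda>_. M)"

text \<open>Supersample Z~ = (Z~_{i,j}), i < n, j in {0,1} encoded as bool (False = 0, True = 1).\<close>
definition super_space :: "nat \<Rightarrow> 'z measure \<Rightarrow> (nat \<times> bool \<Rightarrow> 'z) measure" where
  "super_space n M = PiM ({..<n} \<times> (UNIV :: bool set)) (\<lambda>_. M)"

definition mask_space :: "nat \<Rightarrow> (nat \<Rightarrow> bool) measure" where
  "mask_space n = PiM {..<n} (\<lambda>_. measure_pmf (pmf_of_set (UNIV :: bool set)))"

definition select :: "nat \<Rightarrow> (nat \<times> bool \<Rightarrow> 'z) \<Rightarrow> (nat \<Rightarrow> bool) \<Rightarrow> (nat \<Rightarrow> 'z)" where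
  "select n zt u = (\<lambda>i\<in>{..<n}. zt (i, u i))"

text \<open>Joint law of (Z~, U, W) with W ~ A(Z~_U); A is a Markov kernel (randomized algorithm).\<close>
definition supersample_joint ::
  "nat \<Rightarrow> 'z measure \<Rightarrow> 'w measure \<Rightarrow> ((nat \<Rightarrow> 'z) \<Rightarrow> 'w measure)
     \<Rightarrow> ((nat \<times> bool \<Rightarrow> 'z) \<times> (nat \<Rightarrow> bool) \<times> 'w) measure" where
  "supersample_joint n M Wsp A =
     bind (super_space n M \<Otimes>\<^sub>M mask_space n)
       (\<lambda>(zt, u). distr (A (select n zt u)) (super_space n M \<Otimes>\<^sub>M mask_space n \<Otimes>\<^sub>M Wsp)
                    (\<lambda>w. (zt, u, w)))"

definition pop_risk :: "nat \<Rightarrow> 'z measure \<Rightarrow> ((nat \<Rightarrow> 'z) \<Rightarrow> 'w measure) \<Rightarrow> ('w \<Rightarrow> 'z \<Rightarrow> real) \<Rightarrow> real" where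
  "pop_risk n M A loss = (\<integral> s. (\<integral> w. (\<integral> z. loss w z \<partial>M) \<partial>(A s)) \<partial>(sample_space n M))"

definition emp_risk :: "nat \<Rightarrow> 'z measure \<Rightarrow> ((nat \<Rightarrow> 'z) \<Rightarrow> 'w measure) \<Rightarrow> ('w \<Rightarrow> 'z \<Rightarrow> real) \<Rightarrow> real" where
  "emp_risk n M A loss = (\<integral> s. (\<integral> w. (\<Sum>i<n. loss w (s i)) / real n \<partial>(A s)) \<partial>(sample_space n M))"

definition gen_error :: "nat \<Rightarrow> 'z measure \<Rightarrow> ((nat \<Rightarrow> 'z) \<Rightarrow> 'w measure) \<Rightarrow> ('w \<Rightarrow> 'z \<Rightarrow> real) \<Rightarrow> real" where
  "gen_error n M A loss = pop_risk n M A loss - emp_risk n M A loss"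

definition delta_loss :: "('w \<Rightarrow> 'z \<Rightarrow> real) \<Rightarrow> nat
     \<Rightarrow> (nat \<times> bool \<Rightarrow> 'z) \<times> (nat \<Rightarrow> bool) \<times> 'w \<Rightarrow> real" where
  "delta_loss loss i x = (case x of (zt, u, w) \<Rightarrow> loss w (zt (i, True)) - loss w (zt (i, False)))"

definition mask_coord :: "nat \<Rightarrow> (nat \<times> bool \<Rightarrow> 'z) \<times> (nat \<Rightarrow> bool) \<times> 'w \<Rightarrow> bool" where
  "mask_coord i x = fst (snd x) i"

end

theory Submission
  imports Defs
begin

lemma w1_mean_bound:
  assumes P: "prob_space P" and Q: "prob_space Q" and sP: "sets P = sets borel" and sQ: "sets Q = sets borel"
    and iP: "integrable P (\<lambda>x. x)" and iQ: "integrable Q (\<lambda>x. x)"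
  shows "ennreal \<bar>(\<integral>x. x \<partial>P) - (\<integral>x. x \<partial>Q)\<bar> \<le> wasserstein1 P Q"
  unfolding wasserstein1_def
proof (rule INF_greatest)
  fix \<gamma> assume "\<gamma> \<in> {\<gamma>. coupling P Q \<gamma>}"
  then have c: "prob_space \<gamma>" "sets \<gamma> = sets (borel \<Otimes>\<^sub>M borel)" "distr \<gamma> borel fst = P" "distr \<gamma> borel snd = Q"
    by (auto simp: coupling_def)
  have mf: "fst \<in> measurable \<gamma> (borel :: real measure)" 
    using measurable_cong_sets[OF c(2) refl] by auto
  have ms: "snd \<in> measurable \<gamma> (borel :: real measure)" 
    using measurable_cong_sets[OF c(2) refl] by auto
  have i1: "integrable \<gamma> (\<lambda>x. fst x :: real)"
    using iP unfolding c(3)[symmetric] by (subst (asm) integrable_distr_eq[OF mf]) auto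
  have i2: "integrable \<gamma> (\<lambda>x. snd x :: real)"
    using iQ unfolding c(4)[symmetric] by (subst (asm) integrable_distr_eq[OF ms]) auto
  have e1: "(\<integral>x. x \<partial>P) = (\<integral>x. fst x \<partial>\<gamma>)"
    unfolding c(3)[symmetric] by (subst integral_distr[OF mf]) auto
  have e2: "(\<integral>x. x \<partial>Q) = (\<integral>x. snd x \<partial>\<gamma>)"
    unfolding c(4)[symmetric] by (subst integral_distr[OF ms]) auto
  have "\<bar>(\<integral>x. x \<partial>P) - (\<integral>x. x \<partial>Q)\<bar> = \<bar>\<integral>x. fst x - snd x \<partial>\<gamma>\<bar>"
    using e1 e2 i1 i2 by simp
  also have "\<dots> \<le> (\<integral>x. \<bar>fst x - snd x\<bar> \<partial>\<gamma>)"
    using integral_abs_bound[of \<gamma> "\<lambda>x. fst x - snd x"] by simp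
  finally have "ennreal \<bar>(\<integral>x. x \<partial>P) - (\<integral>x. x \<partial>Q)\<bar> \<le> ennreal (\<integral>x. \<bar>fst x - snd x\<bar> \<partial>\<gamma>)"
    by (rule ennreal_leI)
  also have "\<dots> = (\<integral>\<^sup>+ x. ennreal \<bar>fst x - snd x\<bar> \<partial>\<gamma>)"
  proof (rule nn_integral_eq_integral[symmetric])
    show "integrable \<gamma> (\<lambda>x. \<bar>fst x - snd x\<bar>)"
      by (rule integrable_abs, rule Bochner_Integration.integrable_diff[OF i1 i2])
  qed simp
  finally show "ennreal \<bar>(\<integral>x. x \<partial>P) - (\<integral>x. x \<partial>Q)\<bar> \<le> (\<integral>\<^sup>+ x. ennreal \<bar>fst x - snd x\<bar> \<partial>\<gamma>)" .
qed

lemma integral_kernel_measurable: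
  fixes f :: "'a \<Rightarrow> 'b \<Rightarrow> real"
  assumes f: "case_prod f \<in> borel_measurable (L \<Otimes>\<^sub>M M)" and g: "g \<in> measurable L (subprob_algebra M)"
  shows "(\<lambda>x. \<integral>y. f x y \<partial>g x) \<in> borel_measurable L"
proof -
  have m1: "(\<lambda>x. distr (g x) (L \<Otimes>\<^sub>M M) (\<lambda>y. (x, y))) \<in> measurable L (subprob_algebra (L \<Otimes>\<^sub>M M))"
    by (rule measurable_distr2[OF _ g]) (simp only: case_prod_Pair measurable_ident)
  have "(\<lambda>x. integral\<^sup>L (distr (g x) (L \<Otimes>\<^sub>M M) (\<lambda>y. (x, y))) (case_prod f)) \<in> borel_measurable L"
    by (rule measurable_compose[OF m1 integral_measurable_subprob_algebra[OF f]])
  moreover have "integral\<^sup>L (distr (g x) (L \<Otimes>\<^sub>M M) (\<lambda>y. (x, y))) (case_prod f) = (\<integral>y. f x y \<partial>g x)"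
    if x: "x \<in> space L" for x
  proof -
    have sg: "sets (g x) = sets M" using measurable_space[OF g x] by (simp add: space_subprob_algebra)
    then have mp: "(\<lambda>y. (x, y)) \<in> measurable (g x) (L \<Otimes>\<^sub>M M)"
      by (subst measurable_cong_sets[OF sg refl]) (rule measurable_Pair1'[OF x])
    show ?thesis using integral_distr[OF mp f] by simp
  qed
  ultimately show ?thesis
    using measurable_cong[of L "\<lambda>x. integral\<^sup>L (distr (g x) (L \<Otimes>\<^sub>M M) (\<lambda>y. (x, y))) (case_prod f)" "\<lambda>x. \<integral>y. f x y \<partial>g x" borel]
    by blast
qed

lemma cond_bound:
  fixes J :: "'a measure" and D :: "'a \<Rightarrow> real" and U :: "'a \<Rightarrow> bool"
  assumes J: "prob_space J" and D: "D \<in> borel_measurable J" and Db: "\<And>x. x \<in> space J \<Longrightarrow> \<bar>D x\<bar> \<le> 1"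
    and U: "U \<in> measurable J (count_space UNIV)"
    and half: "\<And>b. emeasure J {x\<in>space J. U x = b} = ennreal (1/2)"
  shows "ennreal \<bar>\<integral>x. (if U x then - D x else D x) \<partial>J\<bar> \<le>
    (\<integral>\<^sup>+ b. wasserstein1 (distr (uniform_measure J {x\<in>space J. U x = b}) borel D) (distr J borel D)
      \<partial>(distr J (count_space UNIV) U))"
proof -
  interpret prob_space J by fact
  define A where "A b = {x\<in>space J. U x = b}" for b
  have Aeq: "A b = U -` {b} \<inter> space J" for b unfolding A_def by auto
  have Asets: "A b \<in> sets J" for b unfolding Aeq by (rule measurable_sets[OF U]) simp
  note Asets[measurable] D[measurable]
  have hA: "emeasure J (A b) = ennreal (1/2)" for b unfolding A_def by (rule half)
  have iD: "integrable J D"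
    by (rule integrable_const_bound[where B=1]) (auto intro: AE_I2 Db D)
  define I where "I b = (\<integral>x. D x * indicator (A b) x \<partial>J)" for b
  have iDA: "integrable J (\<lambda>x. D x * indicator (A b) x)" for b
    by (rule integrable_real_mult_indicator[OF Asets iD])
  define W where "W b = wasserstein1 (distr (uniform_measure J (A b)) borel D) (distr J borel D)" for b
  have ED: "(\<integral>x. x \<partial>distr J borel D) = I True + I False"
  proof -
    have "(\<integral>x. x \<partial>distr J borel D) = (\<integral>x. D x \<partial>J)" by (rule integral_distr[OF D]) simp
    also have "\<dots> = (\<integral>x. D x * indicator (A True) x + D x * indicator (A False) x \<partial>J)"
      by (rule Bochner_Integration.integral_cong) (auto simp: A_def indicator_def)
    also have "\<dots> = I True + I False" unfolding I_def by (rule Bochner_Integration.integral_add[OF iDA iDA])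
    finally show ?thesis .
  qed
  have Eb: "(\<integral>x. x \<partial>distr (uniform_measure J (A b)) borel D) = 2 * I b" for b
  proof -
    have mD: "D \<in> borel_measurable (uniform_measure J (A b))"
      by (subst measurable_cong_sets[OF sets_uniform_measure refl]) (rule D)
    have u: "uniform_measure J (A b) = density J (\<lambda>x. ennreal (2 * indicator (A b) x))"
    proof -
      have h: "indicator (A b) x / ennreal (1/2) = ennreal (2 * indicator (A b) x)" for x
      proof (cases "x \<in> A b")
        case True then show ?thesis using divide_ennreal[of 1 "1/2"] by simp
      qed simp
      show ?thesis unfolding uniform_measure_def hA h ..
    qed
    have "(\<integral>x. x \<partial>distr (uniform_measure J (A b)) borel D) = (\<integral>x. D x \<partial>uniform_measure J (A b))"
      by (rule integral_distr[OF mD]) simp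
    also have "\<dots> = (\<integral>x. (2 * indicator (A b) x) *\<^sub>R D x \<partial>J)"
      unfolding u by (rule integral_density[OF D]) (intro borel_measurable_times borel_measurable_const borel_measurable_indicator Asets, simp)
    also have "\<dots> = (\<integral>x. 2 * (D x * indicator (A b) x) \<partial>J)"
      by (rule Bochner_Integration.integral_cong) auto
    also have "\<dots> = 2 * I b" unfolding I_def by simp
    finally show ?thesis .
  qed
  have Wb: "ennreal \<bar>2 * I b - (I True + I False)\<bar> \<le> W b" for b
  proof -
    have pu: "prob_space (uniform_measure J (A b))"
      by (rule prob_space_uniform_measure) (auto simp: hA)
    have mD: "D \<in> borel_measurable (uniform_measure J (A b))"
      by (subst measurable_cong_sets[OF sets_uniform_measure refl]) (rule D)
    have iu: "integrable (uniform_measure J (A b)) D"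
    proof -
      interpret u: prob_space "uniform_measure J (A b)" by (rule pu)
      show ?thesis
        by (rule u.integrable_const_bound[where B=1]) (auto intro!: AE_I2 Db mD)
    qed
    show ?thesis unfolding W_def Eb[symmetric] ED[symmetric]
    proof (rule w1_mean_bound)
      show "prob_space (distr (uniform_measure J (A b)) borel D)"
        by (rule prob_space.prob_space_distr[OF pu mD])
      show "prob_space (distr J borel D)" by (rule prob_space_distr[OF D])
      show "integrable (distr (uniform_measure J (A b)) borel D) (\<lambda>x. x)"
        by (subst integrable_distr_eq[OF mD]) (auto intro: iu)
      show "integrable (distr J borel D) (\<lambda>x. x)"
        by (subst integrable_distr_eq[OF D]) (auto intro: iD)
    qed simp_all
  qed
  have RHS: "(\<integral>\<^sup>+ b. W b \<partial>(distr J (count_space UNIV) U)) = W True * ennreal (1/2) + W False * ennreal (1/2)"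
  proof -
    have "(\<integral>\<^sup>+ b. W b \<partial>(distr J (count_space UNIV) U)) = (\<integral>\<^sup>+ x. W (U x) \<partial>J)"
      by (rule nn_integral_distr[OF U]) simp
    also have "\<dots> = (\<integral>\<^sup>+ x. W True * indicator (A True) x + W False * indicator (A False) x \<partial>J)"
      by (rule nn_integral_cong) (auto simp: A_def indicator_def)
    also have "\<dots> = (\<integral>\<^sup>+ x. W True * indicator (A True) x \<partial>J) + (\<integral>\<^sup>+ x. W False * indicator (A False) x \<partial>J)"
      by (rule nn_integral_add) (auto intro: Asets)
    also have "\<dots> = W True * ennreal (1/2) + W False * ennreal (1/2)"
      using Asets by (simp add: nn_integral_cmult_indicator hA)
    finally show ?thesis .
  qed
  have L: "(\<integral>x. (if U x then - D x else D x) \<partial>J) = I False - I True"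
  proof -
    have "(\<integral>x. (if U x then - D x else D x) \<partial>J) = (\<integral>x. D x * indicator (A False) x - D x * indicator (A True) x \<partial>J)"
      by (rule Bochner_Integration.integral_cong) (auto simp: A_def indicator_def)
    also have "\<dots> = I False - I True" unfolding I_def by (rule Bochner_Integration.integral_diff[OF iDA iDA])
    finally show ?thesis .
  qed
  have "ennreal \<bar>I False - I True\<bar> = ennreal \<bar>2 * I True - (I True + I False)\<bar> * ennreal (1/2) + ennreal \<bar>2 * I False - (I True + I False)\<bar> * ennreal (1/2)"
  proof -
    have r: "\<bar>I False - I True\<bar> = \<bar>2 * I True - (I True + I False)\<bar> * (1/2) + \<bar>2 * I False - (I True + I False)\<bar> * (1/2)"
      by (simp add: abs_if)
    have a: "ennreal (x * (1/2)) = ennreal x * ennreal (1/2)" if "0 \<le> x" for x :: real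
      by (rule ennreal_mult) (use that in auto)
    have p: "ennreal (x * (1/2) + y * (1/2)) = ennreal (x * (1/2)) + ennreal (y * (1/2))" if "0 \<le> x" "0 \<le> y" for x y :: real
      by (rule ennreal_plus) (use that in auto)
    show ?thesis unfolding r by (simp only: p[OF abs_ge_zero abs_ge_zero] a[OF abs_ge_zero])

  qed
  also have "\<dots> \<le> W True * ennreal (1/2) + W False * ennreal (1/2)"
    by (intro add_mono mult_right_mono Wb) auto
  also have "\<dots> = (\<integral>\<^sup>+ b. W b \<partial>(distr J (count_space UNIV) U))" by (rule RHS[symmetric])
  finally show ?thesis unfolding L W_def A_def .
qed

definition phi :: "nat \<Rightarrow> (nat \<Rightarrow> bool) \<Rightarrow> (nat \<Rightarrow> 'z) \<times> (nat \<Rightarrow> 'z) \<Rightarrow> (nat \<times> bool \<Rightarrow> 'z)" where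
  "phi n u p = (\<lambda>j\<in>{..<n} \<times> UNIV. if snd j = u (fst j) then fst p (fst j) else snd p (fst j))"

lemma phi_measurable:
  "phi n u \<in> measurable (sample_space n M \<Otimes>\<^sub>M sample_space n M) (super_space n M)"
  unfolding phi_def super_space_def
proof (rule measurable_restrict)
  fix j :: "nat \<times> bool" assume j: "j \<in> {..<n} \<times> UNIV"
  then have i: "fst j \<in> {..<n}" by auto
  have m1: "(\<lambda>p. fst p (fst j)) \<in> measurable (sample_space n M \<Otimes>\<^sub>M sample_space n M) M"
    unfolding sample_space_def
    by (rule measurable_compose[OF measurable_fst measurable_component_singleton[OF i]])
  have m2: "(\<lambda>p. snd p (fst j)) \<in> measurable (sample_space n M \<Otimes>\<^sub>M sample_space n M) M"
    unfolding sample_space_def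
    by (rule measurable_compose[OF measurable_snd measurable_component_singleton[OF i]])
  show "(\<lambda>p. if snd j = u (fst j) then fst p (fst j) else snd p (fst j)) \<in> measurable (sample_space n M \<Otimes>\<^sub>M sample_space n M) M"
  proof (cases "snd j = u (fst j)")
    case True then show ?thesis using m1 by simp
  next
    case False then show ?thesis using m2 by simp
  qed
qed

lemma super_reindex:
  assumes M: "prob_space M"
  shows "distr (sample_space n M \<Otimes>\<^sub>M sample_space n M) (super_space n M) (phi n u) = super_space n M"
proof -
  interpret P: product_sigma_finite "\<lambda>_::nat\<times>bool. M"
    by (simp add: product_sigma_finite_def M prob_space_imp_sigma_finite)
  interpret Q: product_sigma_finite "\<lambda>_::nat. M"
    by (simp add: product_sigma_finite_def M prob_space_imp_sigma_finite)
  interpret S: prob_space "sample_space n M"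
    unfolding sample_space_def by (rule prob_space_PiM) (rule M)
  let ?I = "{..<n} \<times> (UNIV :: bool set)"
  show ?thesis unfolding super_space_def
  proof (rule P.PiM_eqI)
    show "finite ?I" by simp
    show "sets (distr (sample_space n M \<Otimes>\<^sub>M sample_space n M) (Pi\<^sub>M ?I (\<lambda>_. M)) (phi n u)) = sets (Pi\<^sub>M ?I (\<lambda>_. M))"
      by simp
  next
    fix X :: "nat \<times> bool \<Rightarrow> 'a set" assume X: "\<And>j. j \<in> ?I \<Longrightarrow> X j \<in> sets M"
    have Xs: "X j \<subseteq> space M" if "j \<in> ?I" for j using sets.sets_into_space[OF X[OF that]] .
    have pre: "phi n u -` Pi\<^sub>E ?I X \<inter> space (sample_space n M \<Otimes>\<^sub>M sample_space n M)
       = (Pi\<^sub>E {..<n} (\<lambda>i. X (i, u i))) \<times> (Pi\<^sub>E {..<n} (\<lambda>i. X (i, \<not> u i)))"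
    proof (rule set_eqI)
      fix p :: "(nat \<Rightarrow> 'a) \<times> (nat \<Rightarrow> 'a)"
      obtain a b where p: "p = (a, b)" by (cases p)
      show "p \<in> phi n u -` Pi\<^sub>E ?I X \<inter> space (sample_space n M \<Otimes>\<^sub>M sample_space n M) \<longleftrightarrow>
            p \<in> (Pi\<^sub>E {..<n} (\<lambda>i. X (i, u i))) \<times> (Pi\<^sub>E {..<n} (\<lambda>i. X (i, \<not> u i)))"
      proof
        assume h: "p \<in> phi n u -` Pi\<^sub>E ?I X \<inter> space (sample_space n M \<Otimes>\<^sub>M sample_space n M)"
        then have sa: "a \<in> extensional {..<n}" and sb: "b \<in> extensional {..<n}"
          by (auto simp: p space_pair_measure sample_space_def space_PiM PiE_def)
        have hh: "\<And>j. j \<in> ?I \<Longrightarrow> (if snd j = u (fst j) then a (fst j) else b (fst j)) \<in> X j"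
        proof -
          fix j assume j: "j \<in> ?I"
          have hh0: "phi n u (a, b) \<in> Pi\<^sub>E ?I X" using h by (simp add: p)
          show "(if snd j = u (fst j) then a (fst j) else b (fst j)) \<in> X j"
            using PiE_mem[OF hh0 j] j unfolding phi_def by (auto split: if_splits)
        qed
        have "a i \<in> X (i, u i)" if "i < n" for i using hh[of "(i, u i)"] that by simp
        moreover have "b i \<in> X (i, \<not> u i)" if "i < n" for i using hh[of "(i, \<not> u i)"] that by simp
        ultimately show "p \<in> (Pi\<^sub>E {..<n} (\<lambda>i. X (i, u i))) \<times> (Pi\<^sub>E {..<n} (\<lambda>i. X (i, \<not> u i)))"
          using sa sb by (auto simp: p PiE_iff)
      next
        assume h: "p \<in> (Pi\<^sub>E {..<n} (\<lambda>i. X (i, u i))) \<times> (Pi\<^sub>E {..<n} (\<lambda>i. X (i, \<not> u i)))"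
        then have ha: "\<And>i. i < n \<Longrightarrow> a i \<in> X (i, u i)" and hb: "\<And>i. i < n \<Longrightarrow> b i \<in> X (i, \<not> u i)"
          and ea: "a \<in> extensional {..<n}" and eb: "b \<in> extensional {..<n}"
          by (auto simp: p PiE_iff)
        have "a i \<in> space M" if "i < n" for i using Xs[of "(i, u i)"] ha[OF that] that by auto
        moreover have "b i \<in> space M" if "i < n" for i using Xs[of "(i, \<not> u i)"] hb[OF that] that by auto
        moreover have "(if c = u i then a i else b i) \<in> X (i, c)" if "i < n" for i c
          using ha[OF that] hb[OF that] by (cases "c = u i") auto
        ultimately show "p \<in> phi n u -` Pi\<^sub>E ?I X \<inter> space (sample_space n M \<Otimes>\<^sub>M sample_space n M)"
          using ea eb ha hb by (auto simp: p phi_def PiE_iff space_pair_measure sample_space_def space_PiM)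
      qed
    qed
    have s1: "Pi\<^sub>E {..<n} (\<lambda>i. X (i, u i)) \<in> sets (sample_space n M)"
      unfolding sample_space_def by (rule sets_PiM_I_finite) (auto intro: X)
    have s2: "Pi\<^sub>E {..<n} (\<lambda>i. X (i, \<not> u i)) \<in> sets (sample_space n M)"
      unfolding sample_space_def by (rule sets_PiM_I_finite) (auto intro: X)
    have "emeasure (distr (sample_space n M \<Otimes>\<^sub>M sample_space n M) (Pi\<^sub>M ?I (\<lambda>_. M)) (phi n u)) (Pi\<^sub>E ?I X)
        = emeasure (sample_space n M \<Otimes>\<^sub>M sample_space n M) (phi n u -` Pi\<^sub>E ?I X \<inter> space (sample_space n M \<Otimes>\<^sub>M sample_space n M))"
      by (rule emeasure_distr[OF phi_measurable[unfolded super_space_def]]) (rule sets_PiM_I_finite, auto intro: X)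
    also have "\<dots> = emeasure (sample_space n M) (Pi\<^sub>E {..<n} (\<lambda>i. X (i, u i))) * emeasure (sample_space n M) (Pi\<^sub>E {..<n} (\<lambda>i. X (i, \<not> u i)))"
      unfolding pre by (rule S.emeasure_pair_measure_Times[OF s1 s2])
    also have "\<dots> = (\<Prod>i<n. emeasure M (X (i, u i))) * (\<Prod>i<n. emeasure M (X (i, \<not> u i)))"
      unfolding sample_space_def by (subst (1 2) Q.emeasure_PiM) (auto intro: X)
    also have "\<dots> = (\<Prod>i<n. emeasure M (X (i, True)) * emeasure M (X (i, False)))"
      unfolding prod.distrib[symmetric] by (rule prod.cong) (auto simp: mult.commute split: if_splits, metis (full_types) mult.commute)
    also have "\<dots> = (\<Prod>j\<in>?I. emeasure M (X j))"
    proof -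
      have "(\<Prod>j\<in>?I. emeasure M (X j)) = (\<Prod>i<n. \<Prod>c\<in>UNIV. emeasure M (X (i, c)))"
        by (rule prod.cartesian_product')
      then show ?thesis by (simp add: UNIV_bool mult.commute)
    qed
    finally show "emeasure (distr (sample_space n M \<Otimes>\<^sub>M sample_space n M) (Pi\<^sub>M ?I (\<lambda>_. M)) (phi n u)) (Pi\<^sub>E ?I X) = (\<Prod>j\<in>?I. emeasure M (X j))" .
  qed
qed

lemma prob_bound_integral:
  fixes f :: "'a \<Rightarrow> real"
  assumes Q: "prob_space Q" and f: "f \<in> borel_measurable Q" and b: "\<And>x. x \<in> space Q \<Longrightarrow> \<bar>f x\<bar> \<le> B"
  shows "\<bar>\<integral>x. f x \<partial>Q\<bar> \<le> B"
proof -
  interpret prob_space Q by fact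
  have i: "integrable Q f" by (rule integrable_const_bound[where B=B]) (auto intro: AE_I2 b f)
  have "\<bar>\<integral>x. f x \<partial>Q\<bar> \<le> (\<integral>x. \<bar>f x\<bar> \<partial>Q)"
    using integral_abs_bound[of Q f] by simp
  also have "\<dots> \<le> (\<integral>x. B \<partial>Q)"
    by (rule integral_mono) (auto intro: i b)
  also have "(\<integral>x. B \<partial>Q) = B" using prob_space by simp
  finally show ?thesis .
qed

lemma prob_integrable_bound:
  fixes f :: "'a \<Rightarrow> real"
  assumes Q: "prob_space Q" and f: "f \<in> borel_measurable Q" and b: "\<And>x. x \<in> space Q \<Longrightarrow> \<bar>f x\<bar> \<le> B"
  shows "integrable Q f"
proof -
  interpret prob_space Q by fact
  show ?thesis by (rule integrable_const_bound[where B=B]) (auto intro: AE_I2 b f)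
qed

lemma loss_comp:
  assumes L: "(\<lambda>(w, z). loss w z) \<in> borel_measurable (Wsp \<Otimes>\<^sub>M M)"
    and f: "f \<in> measurable X Wsp" and g: "g \<in> measurable X M"
  shows "(\<lambda>x. loss (f x) (g x)) \<in> borel_measurable X"
  using measurable_compose[OF measurable_Pair[OF f g] L] by simp

lemma prob_space_sample: "prob_space M \<Longrightarrow> prob_space (sample_space n M)"
  unfolding sample_space_def by (rule prob_space_PiM)

lemma prob_space_super: "prob_space M \<Longrightarrow> prob_space (super_space n M)"
  unfolding super_space_def by (rule prob_space_PiM)

lemma prob_space_mask: "prob_space (mask_space n)"
  unfolding mask_space_def by (rule prob_space_PiM) (rule prob_space_measure_pmf)

lemma mask_comp_meas:
  assumes i: "i < n"
  shows "(\<lambda>u. u i) \<in> measurable (mask_space n) (count_space UNIV)"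
proof -
  have "(\<lambda>u. u i) \<in> measurable (mask_space n) (measure_pmf (pmf_of_set (UNIV :: bool set)))"
    unfolding mask_space_def by (rule measurable_component_singleton) (use i in simp)
  then show ?thesis by (subst (asm) measurable_cong_sets[OF refl sets_measure_pmf_count_space])
qed

lemma select_meas:
  "(\<lambda>x. select n (fst x) (snd x)) \<in> measurable (super_space n M \<Otimes>\<^sub>M mask_space n) (sample_space n M)"
  unfolding select_def sample_space_def
proof (rule measurable_restrict)
  fix i assume i: "i \<in> {..<n}"
  have mT: "(\<lambda>x. fst x (i, True)) \<in> measurable (super_space n M \<Otimes>\<^sub>M mask_space n) M"
    unfolding super_space_def
    by (rule measurable_compose[OF measurable_fst measurable_component_singleton]) (use i in simp)
  have mF: "(\<lambda>x. fst x (i, False)) \<in> measurable (super_space n M \<Otimes>\<^sub>M mask_space n) M"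
    unfolding super_space_def
    by (rule measurable_compose[OF measurable_fst measurable_component_singleton]) (use i in simp)
  have mu: "(\<lambda>x. snd x i) \<in> measurable (super_space n M \<Otimes>\<^sub>M mask_space n) (count_space UNIV)"
    by (rule measurable_compose[OF measurable_snd mask_comp_meas]) (use i in simp)
  have ps: "{x \<in> space (super_space n M \<Otimes>\<^sub>M mask_space n). snd x i} \<in> sets (super_space n M \<Otimes>\<^sub>M mask_space n)"
  proof -
    have "{x \<in> space (super_space n M \<Otimes>\<^sub>M mask_space n). snd x i} = (\<lambda>x. snd x i) -` {True} \<inter> space (super_space n M \<Otimes>\<^sub>M mask_space n)"
      by auto
    then show ?thesis using measurable_sets[OF mu, of "{True}"] by simp
  qed
  have eq: "(\<lambda>x. fst x (i, snd x i)) = (\<lambda>x. if snd x i then fst x (i, True) else fst x (i, False))"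
    by (auto simp: fun_eq_iff)
  show "(\<lambda>x. fst x (i, snd x i)) \<in> measurable (super_space n M \<Otimes>\<^sub>M mask_space n) M"
    unfolding eq by (rule measurable_If[OF mT mF ps])
qed

locale ss_setting =
  fixes n :: nat and M :: "'z measure" and Wsp :: "'w measure"
    and A :: "(nat \<Rightarrow> 'z) \<Rightarrow> 'w measure" and loss :: "'w \<Rightarrow> 'z \<Rightarrow> real"
  assumes n: "n > 0"
    and M: "prob_space M"
    and A: "A \<in> measurable (sample_space n M) (prob_algebra Wsp)"
    and L: "(\<lambda>(w, z). loss w z) \<in> borel_measurable (Wsp \<Otimes>\<^sub>M M)"
    and Lb: "\<And>w z. w \<in> space Wsp \<Longrightarrow> z \<in> space M \<Longrightarrow> 0 \<le> loss w z \<and> loss w z \<le> 1"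

context ss_setting
begin

lemma pairw_meas:
  assumes x: "x \<in> space (super_space n M \<Otimes>\<^sub>M mask_space n)" and Q: "sets Q = sets Wsp"
  shows "(\<lambda>w. (fst x, snd x, w)) \<in> measurable Q (super_space n M \<Otimes>\<^sub>M mask_space n \<Otimes>\<^sub>M Wsp)"
proof -
  have x1: "fst x \<in> space (super_space n M)" and x2: "snd x \<in> space (mask_space n)"
    using x by (auto simp: space_pair_measure)
  have "(\<lambda>w. (fst x, snd x, w)) \<in> measurable Wsp (super_space n M \<Otimes>\<^sub>M mask_space n \<Otimes>\<^sub>M Wsp)"
    using measurable_compose[OF measurable_Pair1'[OF x2, of Wsp] measurable_Pair1'[OF x1, of "mask_space n \<Otimes>\<^sub>M Wsp"]]
    by (simp add: comp_def)
  then show ?thesis by (subst measurable_cong_sets[OF Q refl])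
qed

lemma A_sel_meas: "(\<lambda>x. A (select n (fst x) (snd x))) \<in> measurable (super_space n M \<Otimes>\<^sub>M mask_space n) (prob_algebra Wsp)"
  by (rule measurable_compose[OF select_meas A])

lemma A_sel_space:
  assumes "x \<in> space (super_space n M \<Otimes>\<^sub>M mask_space n)"
  shows "prob_space (A (select n (fst x) (snd x)))" "sets (A (select n (fst x) (snd x))) = sets Wsp"
  using measurable_space[OF A_sel_meas assms] by (auto simp: space_prob_algebra)

lemma N_meas:
  "(\<lambda>(zt, u). distr (A (select n zt u)) (super_space n M \<Otimes>\<^sub>M mask_space n \<Otimes>\<^sub>M Wsp) (\<lambda>w. (zt, u, w)))
     \<in> measurable (super_space n M \<Otimes>\<^sub>M mask_space n) (prob_algebra (super_space n M \<Otimes>\<^sub>M mask_space n \<Otimes>\<^sub>M Wsp))"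
proof -
  let ?K = "super_space n M \<Otimes>\<^sub>M mask_space n"
  let ?\<Omega> = "super_space n M \<Otimes>\<^sub>M mask_space n \<Otimes>\<^sub>M Wsp"
  have eqf: "(\<lambda>(zt, u). distr (A (select n zt u)) ?\<Omega> (\<lambda>w. (zt, u, w)))
      = (\<lambda>x. distr (A (select n (fst x) (snd x))) ?\<Omega> (\<lambda>w. (fst x, snd x, w)))"
    by (rule ext) (simp add: split_beta)
  have f0: "(\<lambda>y. (fst (fst y), snd (fst y), snd y)) \<in> measurable (?K \<Otimes>\<^sub>M Wsp) ?\<Omega>"
    by (rule measurable_Pair[OF measurable_compose[OF measurable_fst measurable_fst]
          measurable_Pair[OF measurable_compose[OF measurable_fst measurable_snd] measurable_snd]])
  have f: "case_prod (\<lambda>x w. (fst x, snd x, w)) \<in> measurable (?K \<Otimes>\<^sub>M Wsp) ?\<Omega>"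
  proof -
    have "case_prod (\<lambda>x w. (fst x, snd x, w)) = (\<lambda>y. (fst (fst y), snd (fst y), snd y))"
      by (rule ext) (simp add: split_beta)
    then show ?thesis using f0 by simp
  qed
  have sub: "(\<lambda>x. distr (A (select n (fst x) (snd x))) ?\<Omega> (\<lambda>w. (fst x, snd x, w))) \<in> measurable ?K (subprob_algebra ?\<Omega>)"
    by (rule measurable_distr2[OF f measurable_prob_algebraD[OF A_sel_meas]])
  have "(\<lambda>x. distr (A (select n (fst x) (snd x))) ?\<Omega> (\<lambda>w. (fst x, snd x, w))) \<in> measurable ?K (prob_algebra ?\<Omega>)"
  proof (rule measurable_prob_algebraI[OF _ sub])
    fix x assume x: "x \<in> space ?K"
    show "prob_space (distr (A (select n (fst x) (snd x))) ?\<Omega> (\<lambda>w. (fst x, snd x, w)))"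
      by (rule prob_space.prob_space_distr[OF A_sel_space(1)[OF x] pairw_meas[OF x A_sel_space(2)[OF x]]])
  qed
  then show ?thesis unfolding eqf .
qed

lemma J_prob: "prob_space (supersample_joint n M Wsp A)"
  unfolding supersample_joint_def
  by (rule prob_space_bind'[OF _ N_meas])
     (simp add: space_prob_algebra prob_space_pair prob_space_super[OF M] prob_space_mask)

lemma J_sets: "sets (supersample_joint n M Wsp A) = sets (super_space n M \<Otimes>\<^sub>M mask_space n \<Otimes>\<^sub>M Wsp)"
  unfolding supersample_joint_def
  by (rule sets_bind'[OF _ N_meas])
     (simp add: space_prob_algebra prob_space_pair prob_space_super[OF M] prob_space_mask)

lemma J_space: "space (supersample_joint n M Wsp A) = space (super_space n M \<Otimes>\<^sub>M mask_space n \<Otimes>\<^sub>M Wsp)"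
  by (rule sets_eq_imp_space_eq[OF J_sets])

lemma J_integral:
  fixes f :: "_ \<Rightarrow> real"
  assumes f: "f \<in> borel_measurable (super_space n M \<Otimes>\<^sub>M mask_space n \<Otimes>\<^sub>M Wsp)"
    and fb: "\<And>x. x \<in> space (super_space n M \<Otimes>\<^sub>M mask_space n \<Otimes>\<^sub>M Wsp) \<Longrightarrow> \<bar>f x\<bar> \<le> B"
  shows "(\<integral>x. f x \<partial>supersample_joint n M Wsp A) =
    (\<integral>x. (\<integral>w. f (fst x, snd x, w) \<partial>A (select n (fst x) (snd x))) \<partial>(super_space n M \<Otimes>\<^sub>M mask_space n))"
proof -
  let ?K = "super_space n M \<Otimes>\<^sub>M mask_space n"
  let ?\<Omega> = "super_space n M \<Otimes>\<^sub>M mask_space n \<Otimes>\<^sub>M Wsp"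
  let ?N = "(\<lambda>(zt, u). distr (A (select n zt u)) ?\<Omega> (\<lambda>w. (zt, u, w)))"
  have pK: "prob_space ?K" by (simp add: prob_space_pair prob_space_super[OF M] prob_space_mask)
  have Nsub: "?N \<in> measurable ?K (subprob_algebra ?\<Omega>)" by (rule measurable_prob_algebraD[OF N_meas])
  have "(\<integral>x. f x \<partial>supersample_joint n M Wsp A) = (\<integral>x. integral\<^sup>L (?N x) f \<partial>?K)"
    unfolding supersample_joint_def
  proof (rule integral_bind[OF f fb Nsub])
    show "finite_measure ?K" using pK by (simp add: prob_space_def)
    show "AE x in ?K. emeasure (?N x) (space (?N x)) \<le> ennreal 1"
    proof (rule AE_I2)
      fix x assume x: "x \<in> space ?K"
      have "prob_space (?N x)"
        using prob_space.prob_space_distr[OF A_sel_space(1)[OF x] pairw_meas[OF x A_sel_space(2)[OF x]]]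
        by (simp add: split_beta)
      then show "emeasure (?N x) (space (?N x)) \<le> ennreal 1" by (simp add: prob_space.emeasure_space_1)
    qed
  qed
  also have "\<dots> = (\<integral>x. (\<integral>w. f (fst x, snd x, w) \<partial>A (select n (fst x) (snd x))) \<partial>?K)"
  proof (rule Bochner_Integration.integral_cong[OF refl])
    fix x assume x: "x \<in> space ?K"
    have "integral\<^sup>L (?N x) f = integral\<^sup>L (distr (A (select n (fst x) (snd x))) ?\<Omega> (\<lambda>w. (fst x, snd x, w))) f"
      by (simp add: split_beta)
    also have "\<dots> = (\<integral>w. f (fst x, snd x, w) \<partial>A (select n (fst x) (snd x)))"
      by (rule integral_distr[OF pairw_meas[OF x A_sel_space(2)[OF x]] f])
    finally show "integral\<^sup>L (?N x) f = (\<integral>w. f (fst x, snd x, w) \<partial>A (select n (fst x) (snd x)))" .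
  qed
  finally show ?thesis .
qed

end

lemma avg_bound:
  fixes x :: "nat \<Rightarrow> real"
  assumes n: "n > 0" and b: "\<And>i. i < n \<Longrightarrow> \<bar>x i\<bar> \<le> 1"
  shows "\<bar>(\<Sum>i<n. x i) / real n\<bar> \<le> 1"
proof -
  have "\<bar>\<Sum>i<n. x i\<bar> \<le> (\<Sum>i<n. \<bar>x i\<bar>)" by (rule sum_abs)
  also have "\<dots> \<le> (\<Sum>i<n. 1)" by (rule sum_mono) (use b in auto)
  finally have s: "\<bar>\<Sum>i<n. x i\<bar> \<le> real n" by simp
  have np: "real n > 0" using n by simp
  have "\<bar>(\<Sum>i<n. x i) / real n\<bar> = \<bar>\<Sum>i<n. x i\<bar> / real n" by (simp add: abs_divide)
  also have "\<dots> \<le> 1" using s np by (simp add: divide_le_eq)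
  finally show ?thesis .
qed
context ss_setting
begin

lemma A_space:
  assumes "a \<in> space (sample_space n M)"
  shows "prob_space (A a)" "sets (A a) = sets Wsp" "space (A a) = space Wsp"
proof -
  show 1: "prob_space (A a)" "sets (A a) = sets Wsp" using measurable_space[OF A assms] by (auto simp: space_prob_algebra)
  show "space (A a) = space Wsp" by (rule sets_eq_imp_space_eq[OF 1(2)])
qed

lemma sample_space_mem: "a \<in> space (sample_space n M) \<Longrightarrow> i < n \<Longrightarrow> a i \<in> space M"
  by (auto simp: sample_space_def space_PiM)

lemma comp_meas: "i < n \<Longrightarrow> (\<lambda>b. b i) \<in> measurable (sample_space n M) M"
  unfolding sample_space_def by (rule measurable_component_singleton) simp

lemma loss_w_meas: "w \<in> space Wsp \<Longrightarrow> (\<lambda>z. loss w z) \<in> borel_measurable M"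
  using measurable_compose[OF measurable_Pair1'[of w Wsp M] L] by simp

lemma c_meas: "(\<lambda>w. \<integral>z. loss w z \<partial>M) \<in> borel_measurable Wsp"
proof -
  interpret prob_space M by (rule M)
  show ?thesis by (rule borel_measurable_lebesgue_integral) (use L in simp)
qed

lemma c_bound: "w \<in> space Wsp \<Longrightarrow> \<bar>\<integral>z. loss w z \<partial>M\<bar> \<le> 1"
  by (rule prob_bound_integral[OF M loss_w_meas]) (use Lb in auto)

lemma int_component: 
  assumes w: "w \<in> space Wsp" and i: "i < n"
  shows "(\<integral>b. loss w (b i) \<partial>sample_space n M) = (\<integral>z. loss w z \<partial>M)"
proof -
  have "distr (sample_space n M) M (\<lambda>b. b i) = M"
    unfolding sample_space_def by (rule distr_PiM_component) (use M i in auto)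
  then show ?thesis
    using integral_distr[OF comp_meas[OF i] loss_w_meas[OF w]] by simp
qed

lemma h_meas:
  assumes a: "a \<in> space (sample_space n M)"
  shows "(\<lambda>(b, w). (\<Sum>i<n. loss w (b i) - loss w (a i)) / real n) \<in> borel_measurable (sample_space n M \<Otimes>\<^sub>M Wsp)"
proof -
  have hp: "(\<lambda>p. (\<Sum>i<n. loss (snd p) (fst p i) - loss (snd p) (a i)) / real n) \<in> borel_measurable (sample_space n M \<Otimes>\<^sub>M Wsp)"
  proof (intro borel_measurable_divide borel_measurable_sum borel_measurable_diff borel_measurable_const)
    fix i assume i: "i \<in> {..<n}"
    show "(\<lambda>p. loss (snd p) (fst p i)) \<in> borel_measurable (sample_space n M \<Otimes>\<^sub>M Wsp)"
      by (rule loss_comp[OF L measurable_snd measurable_compose[OF measurable_fst comp_meas]]) (use i in simp)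
    show "(\<lambda>p. loss (snd p) (a i)) \<in> borel_measurable (sample_space n M \<Otimes>\<^sub>M Wsp)"
      by (rule loss_comp[OF L measurable_snd measurable_const]) (use i a in \<open>simp add: sample_space_mem\<close>)
  qed
  have eq: "(\<lambda>(b, w). (\<Sum>i<n. loss w (b i) - loss w (a i)) / real n) = (\<lambda>p. (\<Sum>i<n. loss (snd p) (fst p i) - loss (snd p) (a i)) / real n)"
    by (rule ext) (simp add: split_beta)
  show ?thesis unfolding eq by (rule hp)
qed

lemma inner_S:
  assumes a: "a \<in> space (sample_space n M)"
  shows "(\<integral>b. (\<integral>w. (\<Sum>i<n. loss w (b i) - loss w (a i)) / real n \<partial>A a) \<partial>sample_space n M)
       = (\<integral>w. (\<integral>z. loss w z \<partial>M) - (\<Sum>i<n. loss w (a i)) / real n \<partial>A a)"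
proof -
  let ?S = "sample_space n M"
  interpret pair_sigma_finite ?S "A a"
    by (intro pair_sigma_finite.intro prob_space_imp_sigma_finite prob_space_sample M A_space(1)[OF a])
  interpret pp: prob_space "?S \<Otimes>\<^sub>M A a"
    by (intro prob_space_pair prob_space_sample M A_space(1)[OF a])
  have hm: "(\<lambda>(b, w). (\<Sum>i<n. loss w (b i) - loss w (a i)) / real n) \<in> borel_measurable (?S \<Otimes>\<^sub>M A a)"
    using h_meas[OF a] by (subst measurable_cong_sets[OF sets_pair_measure_cong[OF refl A_space(2)[OF a]] refl])
  have hi: "integrable (?S \<Otimes>\<^sub>M A a) (\<lambda>(b, w). (\<Sum>i<n. loss w (b i) - loss w (a i)) / real n)"
  proof (rule prob_integrable_bound[OF pp.prob_space_axioms hm])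
    fix p assume p: "p \<in> space (?S \<Otimes>\<^sub>M A a)"
    then have b: "fst p \<in> space ?S" and w: "snd p \<in> space Wsp"
      using A_space(3)[OF a] by (auto simp: space_pair_measure)
    show "\<bar>(case p of (b, w) \<Rightarrow> (\<Sum>i<n. loss w (b i) - loss w (a i)) / real n)\<bar> \<le> 1"
      unfolding split_beta
    proof (rule avg_bound[OF n])
      fix i assume i: "i < n"
      show "\<bar>loss (snd p) (fst p i) - loss (snd p) (a i)\<bar> \<le> 1"
        using Lb[OF w sample_space_mem[OF b i]] Lb[OF w sample_space_mem[OF a i]] by (auto simp: abs_le_iff)
    qed
  qed
  have "(\<integral>b. (\<integral>w. (\<Sum>i<n. loss w (b i) - loss w (a i)) / real n \<partial>A a) \<partial>?S)
      = (\<integral>w. (\<integral>b. (\<Sum>i<n. loss w (b i) - loss w (a i)) / real n \<partial>?S) \<partial>A a)"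
    by (rule trans[OF integral_fst[OF hi] integral_snd[OF hi, symmetric]])
  also have "\<dots> = (\<integral>w. (\<integral>z. loss w z \<partial>M) - (\<Sum>i<n. loss w (a i)) / real n \<partial>A a)"
  proof (rule Bochner_Integration.integral_cong[OF refl])
    fix w assume "w \<in> space (A a)"
    then have w: "w \<in> space Wsp" using A_space(3)[OF a] by simp
    interpret S: prob_space ?S by (rule prob_space_sample[OF M])
    have mi: "(\<lambda>b. loss w (b i)) \<in> borel_measurable ?S" if i: "i < n" for i
      by (rule measurable_compose[OF comp_meas[OF i] loss_w_meas[OF w]])
    have ib: "integrable ?S (\<lambda>b. loss w (b i))" if i: "i < n" for i
    proof (rule prob_integrable_bound[OF S.prob_space_axioms mi[OF i], where B=1])
      fix b assume "b \<in> space ?S"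
      then show "\<bar>loss w (b i)\<bar> \<le> 1" using Lb[OF w sample_space_mem[OF _ i]] by auto
    qed
    have ib2: "integrable ?S (\<lambda>b. loss w (b i) - loss w (a i))" if i: "i < n" for i
      by (rule Bochner_Integration.integrable_diff[OF ib[OF i] S.integrable_const])
    have e1: "(\<integral>b. loss w (b i) - loss w (a i) \<partial>?S) = (\<integral>z. loss w z \<partial>M) - loss w (a i)" if i: "i < n" for i
    proof -
      have "(\<integral>b. loss w (b i) - loss w (a i) \<partial>?S) = (\<integral>b. loss w (b i) \<partial>?S) - (\<integral>b. loss w (a i) \<partial>?S)"
        by (rule Bochner_Integration.integral_diff[OF ib[OF i] S.integrable_const])
      also have "(\<integral>b. loss w (a i) \<partial>?S) = loss w (a i)" using S.prob_space by simp
      finally show ?thesis using int_component[OF w i] by simp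
    qed
    have isum: "(\<integral>b. (\<Sum>i<n. loss w (b i) - loss w (a i)) \<partial>?S) = (\<Sum>i<n. (\<integral>b. loss w (b i) - loss w (a i) \<partial>?S))"
      by (rule Bochner_Integration.integral_sum) (rule ib2, simp)
    have "(\<integral>b. (\<Sum>i<n. loss w (b i) - loss w (a i)) / real n \<partial>?S)
        = (\<integral>b. (\<Sum>i<n. loss w (b i) - loss w (a i)) \<partial>?S) / real n"
      by (rule integral_divide_zero)
    also have "\<dots> = (\<Sum>i<n. (\<integral>b. loss w (b i) - loss w (a i) \<partial>?S)) / real n"
      by (simp only: isum)
    also have "\<dots> = (\<Sum>i<n. (\<integral>z. loss w z \<partial>M) - loss w (a i)) / real n"
      by (rule arg_cong[where f="\<lambda>x. x / real n"], rule sum.cong[OF refl], rule e1, simp)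
    also have "\<dots> = (\<integral>z. loss w z \<partial>M) - (\<Sum>i<n. loss w (a i)) / real n"
      using n by (simp add: sum_subtractf diff_divide_distrib)
    finally show "(\<integral>b. (\<Sum>i<n. loss w (b i) - loss w (a i)) / real n \<partial>?S)
        = (\<integral>z. loss w z \<partial>M) - (\<Sum>i<n. loss w (a i)) / real n" .
  qed
  finally show ?thesis .
qed

end

definition Fint :: "nat \<Rightarrow> ('w \<Rightarrow> 'z \<Rightarrow> real) \<Rightarrow> (nat \<times> bool \<Rightarrow> 'z) \<times> (nat \<Rightarrow> bool) \<times> 'w \<Rightarrow> real" where
  "Fint n loss x = (\<Sum>i<n. if mask_coord i x then - delta_loss loss i x else delta_loss loss i x) / real n"

definition Gker :: "nat \<Rightarrow> ((nat \<Rightarrow> 'z) \<Rightarrow> 'w measure) \<Rightarrow> ('w \<Rightarrow> 'z \<Rightarrow> real) \<Rightarrow> (nat \<times> bool \<Rightarrow> 'z) \<times> (nat \<Rightarrow> bool) \<Rightarrow> real" where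
  "Gker n A loss x = (\<integral>w. Fint n loss (fst x, snd x, w) \<partial>A (select n (fst x) (snd x)))"

context ss_setting
begin


lemma e_meas: "(\<lambda>(a, w). (\<Sum>i<n. loss w (a i)) / real n) \<in> borel_measurable (sample_space n M \<Otimes>\<^sub>M Wsp)"
proof -
  have hp: "(\<lambda>p. (\<Sum>i<n. loss (snd p) (fst p i)) / real n) \<in> borel_measurable (sample_space n M \<Otimes>\<^sub>M Wsp)"
  proof (intro borel_measurable_divide borel_measurable_sum borel_measurable_const)
    fix i assume i: "i \<in> {..<n}"
    show "(\<lambda>p. loss (snd p) (fst p i)) \<in> borel_measurable (sample_space n M \<Otimes>\<^sub>M Wsp)"
      by (rule loss_comp[OF L measurable_snd measurable_compose[OF measurable_fst comp_meas]]) (use i in simp)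
  qed
  have eq: "(\<lambda>(a, w). (\<Sum>i<n. loss w (a i)) / real n) = (\<lambda>p. (\<Sum>i<n. loss (snd p) (fst p i)) / real n)"
    by (rule ext) (simp add: split_beta)
  show ?thesis unfolding eq by (rule hp)
qed

lemma c2_meas: "(\<lambda>(a, w). \<integral>z. loss w z \<partial>M) \<in> borel_measurable (sample_space n M \<Otimes>\<^sub>M Wsp)"
proof -
  have hp: "(\<lambda>p. \<integral>z. loss (snd p) z \<partial>M) \<in> borel_measurable (sample_space n M \<Otimes>\<^sub>M Wsp)"
    by (rule measurable_compose[OF measurable_snd c_meas])
  have eq: "(\<lambda>(a, w). \<integral>z. loss w z \<partial>M) = (\<lambda>p. \<integral>z. loss (snd p) z \<partial>M)"
    by (rule ext) (simp add: split_beta)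
  show ?thesis unfolding eq by (rule hp)
qed

lemma kernel_int_facts:
  fixes f :: "(nat \<Rightarrow> 'z) \<Rightarrow> 'w \<Rightarrow> real"
  assumes fm: "case_prod f \<in> borel_measurable (sample_space n M \<Otimes>\<^sub>M Wsp)"
    and fb: "\<And>a w. a \<in> space (sample_space n M) \<Longrightarrow> w \<in> space Wsp \<Longrightarrow> \<bar>f a w\<bar> \<le> 1"
  shows "integrable (sample_space n M) (\<lambda>a. \<integral>w. f a w \<partial>A a)"
    and "\<And>a. a \<in> space (sample_space n M) \<Longrightarrow> integrable (A a) (f a)"
proof -
  have m: "(\<lambda>a. \<integral>w. f a w \<partial>A a) \<in> borel_measurable (sample_space n M)"
    by (rule integral_kernel_measurable[OF fm measurable_prob_algebraD[OF A]])
  have fa: "f a \<in> borel_measurable (A a)" if a: "a \<in> space (sample_space n M)" for a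
  proof -
    have hp: "(\<lambda>w. case_prod f (a, w)) \<in> borel_measurable Wsp"
      by (rule measurable_compose[OF measurable_Pair1'[OF a] fm])
    then have "f a \<in> borel_measurable Wsp" by simp
    then show ?thesis by (subst measurable_cong_sets[OF A_space(2)[OF a] refl])
  qed
  show "integrable (A a) (f a)" if a: "a \<in> space (sample_space n M)" for a
    by (rule prob_integrable_bound[OF A_space(1)[OF a] fa[OF a], where B=1])
       (use fb[OF a] A_space(3)[OF a] in auto)
  show "integrable (sample_space n M) (\<lambda>a. \<integral>w. f a w \<partial>A a)"
  proof (rule prob_integrable_bound[OF prob_space_sample[OF M] m, where B=1])
    fix a assume a: "a \<in> space (sample_space n M)"
    show "\<bar>\<integral>w. f a w \<partial>A a\<bar> \<le> 1"
      by (rule prob_bound_integral[OF A_space(1)[OF a] fa[OF a]])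
         (use fb[OF a] A_space(3)[OF a] in auto)
  qed
qed

lemma meas_slice:
  fixes f :: "'a \<Rightarrow> 'w \<Rightarrow> real"
  assumes fm: "case_prod f \<in> borel_measurable (X \<Otimes>\<^sub>M Wsp)" and x: "x \<in> space X"
  shows "f x \<in> borel_measurable Wsp"
proof -
  have "(\<lambda>w. case_prod f (x, w)) \<in> borel_measurable Wsp"
    by (rule measurable_compose[OF measurable_Pair1'[OF x] fm])
  then show ?thesis by simp
qed

lemma A_int_bound:
  fixes g :: "'w \<Rightarrow> real"
  assumes a: "a \<in> space (sample_space n M)" and g: "g \<in> borel_measurable Wsp"
    and b: "\<And>w. w \<in> space Wsp \<Longrightarrow> \<bar>g w\<bar> \<le> B"
  shows "\<bar>\<integral>w. g w \<partial>A a\<bar> \<le> B"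
proof -
  have m: "g \<in> borel_measurable (A a)" by (subst measurable_cong_sets[OF A_space(2)[OF a] refl]) (rule g)
  have "\<bar>\<integral>w. g w \<partial>A a\<bar> \<le> B" by (rule prob_bound_integral[OF A_space(1)[OF a] m]) (use b A_space(3)[OF a] in auto)
  then show ?thesis .
qed

lemma loss_avg_bound:
  assumes w: "w \<in> space Wsp" and a: "a \<in> space (sample_space n M)"
  shows "\<bar>(\<Sum>i<n. loss w (a i)) / real n\<bar> \<le> 1"
  by (rule avg_bound[OF n]) (use Lb[OF w sample_space_mem[OF a]] in auto)

lemma loss_avg_bound2:
  assumes w: "w \<in> space Wsp" and a: "a \<in> space (sample_space n M)" and b: "b \<in> space (sample_space n M)"
  shows "\<bar>(\<Sum>i<n. loss w (b i) - loss w (a i)) / real n\<bar> \<le> 1"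
proof (rule avg_bound[OF n])
  fix i assume i: "i < n"
  show "\<bar>loss w (b i) - loss w (a i)\<bar> \<le> 1"
    using Lb[OF w sample_space_mem[OF b i]] Lb[OF w sample_space_mem[OF a i]] by (auto simp: abs_le_iff)
qed

lemma outer_S:
  "integral\<^sup>L (sample_space n M \<Otimes>\<^sub>M sample_space n M)
     (\<lambda>(a, b). \<integral>w. (\<Sum>i<n. loss w (b i) - loss w (a i)) / real n \<partial>A a) = gen_error n M A loss"
proof -
  let ?S = "sample_space n M"
  interpret pair_sigma_finite ?S ?S
    by (intro pair_sigma_finite.intro prob_space_imp_sigma_finite prob_space_sample M)
  have pSS: "prob_space (?S \<Otimes>\<^sub>M ?S)" by (intro prob_space_pair prob_space_sample M)
  have fm0: "(\<lambda>q. (\<Sum>i<n. loss (snd q) (snd (fst q) i) - loss (snd q) (fst (fst q) i)) / real n) \<in> borel_measurable ((?S \<Otimes>\<^sub>M ?S) \<Otimes>\<^sub>M Wsp)"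
  proof (intro borel_measurable_divide borel_measurable_sum borel_measurable_diff borel_measurable_const)
    fix i assume i: "i \<in> {..<n}"
    show "(\<lambda>q. loss (snd q) (snd (fst q) i)) \<in> borel_measurable ((?S \<Otimes>\<^sub>M ?S) \<Otimes>\<^sub>M Wsp)"
      by (rule loss_comp[OF L measurable_snd measurable_compose[OF measurable_compose[OF measurable_fst measurable_snd] comp_meas]]) (use i in simp)
    show "(\<lambda>q. loss (snd q) (fst (fst q) i)) \<in> borel_measurable ((?S \<Otimes>\<^sub>M ?S) \<Otimes>\<^sub>M Wsp)"
      by (rule loss_comp[OF L measurable_snd measurable_compose[OF measurable_compose[OF measurable_fst measurable_fst] comp_meas]]) (use i in simp)
  qed
  have eqf: "case_prod (\<lambda>p w. (\<Sum>i<n. loss w (snd p i) - loss w (fst p i)) / real n) = (\<lambda>q. (\<Sum>i<n. loss (snd q) (snd (fst q) i) - loss (snd q) (fst (fst q) i)) / real n)"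
    by (rule ext) (simp add: split_beta)
  have fm: "case_prod (\<lambda>p w. (\<Sum>i<n. loss w (snd p i) - loss w (fst p i)) / real n) \<in> borel_measurable ((?S \<Otimes>\<^sub>M ?S) \<Otimes>\<^sub>M Wsp)"
    unfolding eqf by (rule fm0)
  have Hm0: "(\<lambda>p. \<integral>w. (\<Sum>i<n. loss w (snd p i) - loss w (fst p i)) / real n \<partial>A (fst p)) \<in> borel_measurable (?S \<Otimes>\<^sub>M ?S)"
    by (rule integral_kernel_measurable[OF fm measurable_prob_algebraD[OF measurable_compose[OF measurable_fst A]]])
  have eqH: "(\<lambda>(a, b). \<integral>w. (\<Sum>i<n. loss w (b i) - loss w (a i)) / real n \<partial>A a) = (\<lambda>p. \<integral>w. (\<Sum>i<n. loss w (snd p i) - loss w (fst p i)) / real n \<partial>A (fst p))"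
    by (rule ext) (simp add: split_beta)
  have Hm: "(\<lambda>(a, b). \<integral>w. (\<Sum>i<n. loss w (b i) - loss w (a i)) / real n \<partial>A a) \<in> borel_measurable (?S \<Otimes>\<^sub>M ?S)"
    unfolding eqH by (rule Hm0)
  have Hi: "integrable (?S \<Otimes>\<^sub>M ?S) (\<lambda>(a, b). \<integral>w. (\<Sum>i<n. loss w (b i) - loss w (a i)) / real n \<partial>A a)"
  proof (rule prob_integrable_bound[OF pSS Hm, where B=1])
    fix p assume p: "p \<in> space (?S \<Otimes>\<^sub>M ?S)"
    then have a: "fst p \<in> space ?S" and b: "snd p \<in> space ?S" by (auto simp: space_pair_measure)
    have gm: "(\<lambda>w. (\<Sum>i<n. loss w (snd p i) - loss w (fst p i)) / real n) \<in> borel_measurable Wsp"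
      using meas_slice[OF fm p] by simp
    show "\<bar>(case p of (a, b) \<Rightarrow> \<integral>w. (\<Sum>i<n. loss w (b i) - loss w (a i)) / real n \<partial>A a)\<bar> \<le> 1"
      unfolding split_beta by (rule A_int_bound[OF a gm]) (rule loss_avg_bound2[OF _ a b])
  qed
  have ci: "integrable ?S (\<lambda>a. \<integral>w. \<integral>z. loss w z \<partial>M \<partial>A a)"
    and ci2: "\<And>a. a \<in> space ?S \<Longrightarrow> integrable (A a) (\<lambda>w. \<integral>z. loss w z \<partial>M)"
    using kernel_int_facts[of "\<lambda>a w. \<integral>z. loss w z \<partial>M", OF c2_meas] c_bound by auto
  have ei: "integrable ?S (\<lambda>a. \<integral>w. (\<Sum>i<n. loss w (a i)) / real n \<partial>A a)"
    and ei2: "\<And>a. a \<in> space ?S \<Longrightarrow> integrable (A a) (\<lambda>w. (\<Sum>i<n. loss w (a i)) / real n)"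
    using kernel_int_facts[of "\<lambda>a w. (\<Sum>i<n. loss w (a i)) / real n", OF e_meas] loss_avg_bound by auto
  have "integral\<^sup>L (?S \<Otimes>\<^sub>M ?S) (\<lambda>(a, b). \<integral>w. (\<Sum>i<n. loss w (b i) - loss w (a i)) / real n \<partial>A a)
      = (\<integral>a. \<integral>b. \<integral>w. (\<Sum>i<n. loss w (b i) - loss w (a i)) / real n \<partial>A a \<partial>?S \<partial>?S)"
    by (rule integral_fst[OF Hi, symmetric])
  also have "\<dots> = (\<integral>a. \<integral>w. (\<integral>z. loss w z \<partial>M) - (\<Sum>i<n. loss w (a i)) / real n \<partial>A a \<partial>?S)"
    by (rule Bochner_Integration.integral_cong[OF refl]) (rule inner_S)
  also have "\<dots> = (\<integral>a. (\<integral>w. \<integral>z. loss w z \<partial>M \<partial>A a) - (\<integral>w. (\<Sum>i<n. loss w (a i)) / real n \<partial>A a) \<partial>?S)"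
    by (rule Bochner_Integration.integral_cong[OF refl]) (rule Bochner_Integration.integral_diff[OF ci2 ei2])
  also have "\<dots> = (\<integral>a. \<integral>w. \<integral>z. loss w z \<partial>M \<partial>A a \<partial>?S) - (\<integral>a. \<integral>w. (\<Sum>i<n. loss w (a i)) / real n \<partial>A a \<partial>?S)"
    by (rule Bochner_Integration.integral_diff[OF ci ei])
  also have "\<dots> = gen_error n M A loss"
    unfolding gen_error_def pop_risk_def emp_risk_def ..
  finally show ?thesis .
qed

lemma delta_eq: "delta_loss loss i = (\<lambda>x. loss (snd (snd x)) (fst x (i, True)) - loss (snd (snd x)) (fst x (i, False)))"
  by (rule ext) (simp add: delta_loss_def split_beta)

lemma delta_meas:
  assumes i: "i < n"
  shows "delta_loss loss i \<in> borel_measurable (super_space n M \<Otimes>\<^sub>M mask_space n \<Otimes>\<^sub>M Wsp)"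
proof -
  let ?\<Omega> = "super_space n M \<Otimes>\<^sub>M mask_space n \<Otimes>\<^sub>M Wsp"
  have w: "(\<lambda>x. snd (snd x)) \<in> measurable ?\<Omega> Wsp" by (rule measurable_compose[OF measurable_snd measurable_snd])
  have z: "(\<lambda>x. fst x (i, c)) \<in> measurable ?\<Omega> M" for c
    unfolding super_space_def by (rule measurable_compose[OF measurable_fst measurable_component_singleton]) (use i in simp)
  show ?thesis unfolding delta_eq
    by (rule borel_measurable_diff[OF loss_comp[OF L w z] loss_comp[OF L w z]])
qed

lemma mask_meas:
  assumes i: "i < n"
  shows "mask_coord i \<in> measurable (super_space n M \<Otimes>\<^sub>M mask_space n \<Otimes>\<^sub>M Wsp) (count_space UNIV)"
proof -
  have hp: "(\<lambda>x. fst (snd x) i) \<in> measurable (super_space n M \<Otimes>\<^sub>M mask_space n \<Otimes>\<^sub>M Wsp) (count_space UNIV)"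
    by (rule measurable_compose[OF measurable_compose[OF measurable_snd measurable_fst] mask_comp_meas[OF i]])
  have eq: "mask_coord i = (\<lambda>x. fst (snd x) i)" by (rule ext) (simp add: mask_coord_def)
  show ?thesis unfolding eq by (rule hp)
qed

lemma space_Omega:
  assumes x: "x \<in> space (super_space n M \<Otimes>\<^sub>M mask_space n \<Otimes>\<^sub>M Wsp)" and i: "i < n"
  shows "fst x (i, c) \<in> space M" "snd (snd x) \<in> space Wsp"
  using x i by (auto simp: space_pair_measure super_space_def space_PiM)

lemma delta_bound:
  assumes x: "x \<in> space (super_space n M \<Otimes>\<^sub>M mask_space n \<Otimes>\<^sub>M Wsp)" and i: "i < n"
  shows "\<bar>delta_loss loss i x\<bar> \<le> 1"
  unfolding delta_eq
  using Lb[OF space_Omega(2)[OF x i] space_Omega(1)[OF x i, of True]]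
        Lb[OF space_Omega(2)[OF x i] space_Omega(1)[OF x i, of False]]
  by (auto simp: abs_le_iff)

lemma sdelta_meas:
  assumes i: "i < n"
  shows "(\<lambda>x. if mask_coord i x then - delta_loss loss i x else delta_loss loss i x) \<in> borel_measurable (super_space n M \<Otimes>\<^sub>M mask_space n \<Otimes>\<^sub>M Wsp)"
proof (rule measurable_If)
  show "(\<lambda>x. - delta_loss loss i x) \<in> borel_measurable (super_space n M \<Otimes>\<^sub>M mask_space n \<Otimes>\<^sub>M Wsp)"
    by (rule borel_measurable_uminus[OF delta_meas[OF i]])
  show "delta_loss loss i \<in> borel_measurable (super_space n M \<Otimes>\<^sub>M mask_space n \<Otimes>\<^sub>M Wsp)"
    by (rule delta_meas[OF i])
  have "{x \<in> space (super_space n M \<Otimes>\<^sub>M mask_space n \<Otimes>\<^sub>M Wsp). mask_coord i x}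
     = mask_coord i -` {True} \<inter> space (super_space n M \<Otimes>\<^sub>M mask_space n \<Otimes>\<^sub>M Wsp)" by auto
  then show "{x \<in> space (super_space n M \<Otimes>\<^sub>M mask_space n \<Otimes>\<^sub>M Wsp). mask_coord i x} \<in> sets (super_space n M \<Otimes>\<^sub>M mask_space n \<Otimes>\<^sub>M Wsp)"
    using measurable_sets[OF mask_meas[OF i], of "{True}"] by simp
qed

lemma Fint_meas: "Fint n loss \<in> borel_measurable (super_space n M \<Otimes>\<^sub>M mask_space n \<Otimes>\<^sub>M Wsp)"
proof -
  have hp: "(\<lambda>x. (\<Sum>i<n. if mask_coord i x then - delta_loss loss i x else delta_loss loss i x) / real n) \<in> borel_measurable (super_space n M \<Otimes>\<^sub>M mask_space n \<Otimes>\<^sub>M Wsp)"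
    by (intro borel_measurable_divide borel_measurable_sum borel_measurable_const sdelta_meas) simp
  have eq: "Fint n loss = (\<lambda>x. (\<Sum>i<n. if mask_coord i x then - delta_loss loss i x else delta_loss loss i x) / real n)"
    by (rule ext) (simp add: Fint_def)
  show ?thesis unfolding eq by (rule hp)
qed

lemma Fint_bound:
  assumes x: "x \<in> space (super_space n M \<Otimes>\<^sub>M mask_space n \<Otimes>\<^sub>M Wsp)"
  shows "\<bar>Fint n loss x\<bar> \<le> 1"
  unfolding Fint_def
  by (rule avg_bound[OF n]) (use delta_bound[OF x] in auto)

lemma Gker_meas: "Gker n A loss \<in> borel_measurable (super_space n M \<Otimes>\<^sub>M mask_space n)"
proof -
  let ?K = "super_space n M \<Otimes>\<^sub>M mask_space n"
  let ?\<Omega> = "super_space n M \<Otimes>\<^sub>M mask_space n \<Otimes>\<^sub>M Wsp"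
  have f0: "(\<lambda>y. (fst (fst y), snd (fst y), snd y)) \<in> measurable (?K \<Otimes>\<^sub>M Wsp) ?\<Omega>"
    by (rule measurable_Pair[OF measurable_compose[OF measurable_fst measurable_fst]
          measurable_Pair[OF measurable_compose[OF measurable_fst measurable_snd] measurable_snd]])
  have f1: "(\<lambda>y. Fint n loss (fst (fst y), snd (fst y), snd y)) \<in> borel_measurable (?K \<Otimes>\<^sub>M Wsp)"
    by (rule measurable_compose[OF f0 Fint_meas])
  have eq0: "case_prod (\<lambda>x w. Fint n loss (fst x, snd x, w)) = (\<lambda>y. Fint n loss (fst (fst y), snd (fst y), snd y))"
    by (rule ext) (simp add: split_beta)
  have f: "case_prod (\<lambda>x w. Fint n loss (fst x, snd x, w)) \<in> borel_measurable (?K \<Otimes>\<^sub>M Wsp)"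
    unfolding eq0 by (rule f1)
  have hp: "(\<lambda>x. \<integral>w. Fint n loss (fst x, snd x, w) \<partial>A (select n (fst x) (snd x))) \<in> borel_measurable ?K"
    by (rule integral_kernel_measurable[OF f measurable_prob_algebraD[OF A_sel_meas]])
  have eq: "Gker n A loss = (\<lambda>x. \<integral>w. Fint n loss (fst x, snd x, w) \<partial>A (select n (fst x) (snd x)))"
    by (rule ext) (simp add: Gker_def)
  show ?thesis unfolding eq by (rule hp)
qed

lemma Gker_bound:
  assumes x: "x \<in> space (super_space n M \<Otimes>\<^sub>M mask_space n)"
  shows "\<bar>Gker n A loss x\<bar> \<le> 1"
proof -
  let ?\<Omega> = "super_space n M \<Otimes>\<^sub>M mask_space n \<Otimes>\<^sub>M Wsp"
  have m: "(\<lambda>w. Fint n loss (fst x, snd x, w)) \<in> borel_measurable (A (select n (fst x) (snd x)))"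
    by (rule measurable_compose[OF pairw_meas[OF x A_sel_space(2)[OF x]] Fint_meas])
  have sp: "space (A (select n (fst x) (snd x))) = space Wsp"
    by (rule sets_eq_imp_space_eq[OF A_sel_space(2)[OF x]])
  have "\<bar>\<integral>w. Fint n loss (fst x, snd x, w) \<partial>A (select n (fst x) (snd x))\<bar> \<le> 1"
  proof (rule prob_bound_integral[OF A_sel_space(1)[OF x] m])
    fix w assume w: "w \<in> space (A (select n (fst x) (snd x)))"
    have "(\<lambda>w. (fst x, snd x, w)) \<in> measurable Wsp ?\<Omega>" by (rule pairw_meas[OF x refl])
    then have "(fst x, snd x, w) \<in> space ?\<Omega>" using w sp by (auto dest: measurable_space)
    then show "\<bar>Fint n loss (fst x, snd x, w)\<bar> \<le> 1" by (rule Fint_bound)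
  qed
  then show ?thesis by (simp add: Gker_def)
qed

end

context ss_setting
begin

lemma phi_select:
  assumes p: "p \<in> space (sample_space n M \<Otimes>\<^sub>M sample_space n M)"
  shows "select n (phi n u p) u = fst p"
proof (rule ext)
  fix i
  have a: "fst p \<in> space (sample_space n M)" using p by (auto simp: space_pair_measure)
  show "select n (phi n u p) u i = fst p i"
  proof (cases "i < n")
    case True then show ?thesis by (simp add: select_def phi_def)
  next
    case False
    have "fst p \<in> (\<Pi>\<^sub>E i\<in>{..<n}. space M)" using a by (simp add: sample_space_def space_PiM)
    then have "fst p i = undefined" using False by (auto intro: PiE_arb)
    then show ?thesis using False by (simp add: select_def)
  qed
qed

lemma phi_Fint:
  "Fint n loss (phi n u p, u, w) = (\<Sum>i<n. loss w (snd p i) - loss w (fst p i)) / real n"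
proof -
  have eqi: "(if mask_coord i (phi n u p, u, w) then - delta_loss loss i (phi n u p, u, w) else delta_loss loss i (phi n u p, u, w))
      = loss w (snd p i) - loss w (fst p i)" if i: "i < n" for i
    using i by (cases "u i") (auto simp: mask_coord_def delta_loss_def phi_def)
  have s: "(\<Sum>i<n. if mask_coord i (phi n u p, u, w) then - delta_loss loss i (phi n u p, u, w) else delta_loss loss i (phi n u p, u, w))
      = (\<Sum>i<n. loss w (snd p i) - loss w (fst p i))"
    by (rule sum.cong[OF refl]) (simp add: eqi)
  show ?thesis unfolding Fint_def s ..
qed

lemma fixed_u:
  assumes u: "u \<in> space (mask_space n)"
  shows "(\<integral>zt. Gker n A loss (zt, u) \<partial>super_space n M) = gen_error n M A loss"
proof -
  let ?S = "sample_space n M"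
  have hm: "(\<lambda>zt. Gker n A loss (zt, u)) \<in> borel_measurable (super_space n M)"
    by (rule measurable_compose[OF measurable_Pair2'[OF u] Gker_meas])
  have "(\<integral>zt. Gker n A loss (zt, u) \<partial>super_space n M)
      = (\<integral>zt. Gker n A loss (zt, u) \<partial>distr (?S \<Otimes>\<^sub>M ?S) (super_space n M) (phi n u))"
    by (simp only: super_reindex[OF M])
  also have "\<dots> = (\<integral>p. Gker n A loss (phi n u p, u) \<partial>(?S \<Otimes>\<^sub>M ?S))"
    by (rule integral_distr[OF phi_measurable hm])
  also have "\<dots> = integral\<^sup>L (?S \<Otimes>\<^sub>M ?S) (\<lambda>(a, b). \<integral>w. (\<Sum>i<n. loss w (b i) - loss w (a i)) / real n \<partial>A a)"
  proof (rule Bochner_Integration.integral_cong[OF refl])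
    fix p assume p: "p \<in> space (?S \<Otimes>\<^sub>M ?S)"
    show "Gker n A loss (phi n u p, u) = (case p of (a, b) \<Rightarrow> \<integral>w. (\<Sum>i<n. loss w (b i) - loss w (a i)) / real n \<partial>A a)"
      unfolding Gker_def split_beta fst_conv snd_conv phi_select[OF p] phi_Fint ..
  qed
  also have "\<dots> = gen_error n M A loss" by (rule outer_S)
  finally show ?thesis .
qed

lemma K_fubini:
  fixes g :: "(nat \<times> bool \<Rightarrow> 'z) \<times> (nat \<Rightarrow> bool) \<Rightarrow> real"
  assumes gm: "g \<in> borel_measurable (super_space n M \<Otimes>\<^sub>M mask_space n)"
    and gb: "\<And>x. x \<in> space (super_space n M \<Otimes>\<^sub>M mask_space n) \<Longrightarrow> \<bar>g x\<bar> \<le> 1"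
  shows "(\<integral>x. g x \<partial>(super_space n M \<Otimes>\<^sub>M mask_space n)) = (\<integral>u. \<integral>zt. g (zt, u) \<partial>super_space n M \<partial>mask_space n)"
proof -
  interpret pair_sigma_finite "super_space n M" "mask_space n"
    by (intro pair_sigma_finite.intro prob_space_imp_sigma_finite prob_space_super M prob_space_mask)
  have pK: "prob_space (super_space n M \<Otimes>\<^sub>M mask_space n)" by (intro prob_space_pair prob_space_super M prob_space_mask)
  have gi: "integrable (super_space n M \<Otimes>\<^sub>M mask_space n) (\<lambda>(zt, u). g (zt, u))"
    by (simp only: case_prod_Pair_iden case_prod_eta) (rule prob_integrable_bound[OF pK gm gb])
  show ?thesis using integral_snd[OF gi] by (simp only: case_prod_Pair_iden case_prod_eta)
qed

lemma K_int: "(\<integral>x. Gker n A loss x \<partial>(super_space n M \<Otimes>\<^sub>M mask_space n)) = gen_error n M A loss"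
proof -
  have "(\<integral>x. Gker n A loss x \<partial>(super_space n M \<Otimes>\<^sub>M mask_space n)) = (\<integral>u. \<integral>zt. Gker n A loss (zt, u) \<partial>super_space n M \<partial>mask_space n)"
    by (rule K_fubini[OF Gker_meas Gker_bound])
  also have "\<dots> = (\<integral>u. gen_error n M A loss \<partial>mask_space n)"
    by (rule Bochner_Integration.integral_cong[OF refl]) (rule fixed_u)
  also have "\<dots> = gen_error n M A loss"
    using prob_space.prob_space[OF prob_space_mask] by simp
  finally show ?thesis .
qed

lemma J_F: "(\<integral>x. Fint n loss x \<partial>supersample_joint n M Wsp A) = gen_error n M A loss"
proof -
  have "(\<integral>x. Fint n loss x \<partial>supersample_joint n M Wsp A) = (\<integral>x. Gker n A loss x \<partial>(super_space n M \<Otimes>\<^sub>M mask_space n))"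
    unfolding Gker_def by (rule J_integral[OF Fint_meas Fint_bound])
  then show ?thesis using K_int by simp
qed

end

context ss_setting
begin

lemma J_meas_cong: "f \<in> borel_measurable (super_space n M \<Otimes>\<^sub>M mask_space n \<Otimes>\<^sub>M Wsp) \<Longrightarrow> f \<in> borel_measurable (supersample_joint n M Wsp A)"
  by (subst measurable_cong_sets[OF J_sets refl])

lemma sdelta_int:
  assumes i: "i < n"
  shows "integrable (supersample_joint n M Wsp A) (\<lambda>x. if mask_coord i x then - delta_loss loss i x else delta_loss loss i x)"
proof (rule prob_integrable_bound[OF J_prob J_meas_cong[OF sdelta_meas[OF i]], where B=1])
  fix x assume "x \<in> space (supersample_joint n M Wsp A)"
  then have x: "x \<in> space (super_space n M \<Otimes>\<^sub>M mask_space n \<Otimes>\<^sub>M Wsp)" by (simp add: J_space)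
  show "\<bar>if mask_coord i x then - delta_loss loss i x else delta_loss loss i x\<bar> \<le> 1"
    using delta_bound[OF x i] by auto
qed

lemma J_F2: "gen_error n M A loss = (\<Sum>i<n. \<integral>x. (if mask_coord i x then - delta_loss loss i x else delta_loss loss i x) \<partial>supersample_joint n M Wsp A) / real n"
proof -
  have eq: "Fint n loss = (\<lambda>x. (\<Sum>i<n. if mask_coord i x then - delta_loss loss i x else delta_loss loss i x) / real n)"
    by (rule ext) (simp add: Fint_def)
  have isum: "(\<integral>x. (\<Sum>i<n. if mask_coord i x then - delta_loss loss i x else delta_loss loss i x) \<partial>supersample_joint n M Wsp A)
     = (\<Sum>i<n. \<integral>x. (if mask_coord i x then - delta_loss loss i x else delta_loss loss i x) \<partial>supersample_joint n M Wsp A)"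
    by (rule Bochner_Integration.integral_sum) (rule sdelta_int, simp)
  have "gen_error n M A loss = (\<integral>x. Fint n loss x \<partial>supersample_joint n M Wsp A)" by (rule J_F[symmetric])
  also have "\<dots> = (\<integral>x. (\<Sum>i<n. if mask_coord i x then - delta_loss loss i x else delta_loss loss i x) \<partial>supersample_joint n M Wsp A) / real n"
    unfolding eq by (rule integral_divide_zero)
  also have "\<dots> = (\<Sum>i<n. \<integral>x. (if mask_coord i x then - delta_loss loss i x else delta_loss loss i x) \<partial>supersample_joint n M Wsp A) / real n"
    by (simp only: isum)
  finally show ?thesis .
qed

lemma half:
  assumes i: "i < n"
  shows "emeasure (supersample_joint n M Wsp A) {x \<in> space (supersample_joint n M Wsp A). mask_coord i x = b} = ennreal (1/2)"
proof -
  let ?J = "supersample_joint n M Wsp A"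
  let ?K = "super_space n M \<Otimes>\<^sub>M mask_space n"
  let ?\<Omega> = "super_space n M \<Otimes>\<^sub>M mask_space n \<Otimes>\<^sub>M Wsp"
  let ?B = "{x \<in> space ?J. mask_coord i x = b}"
  interpret J: prob_space ?J by (rule J_prob)
  have Beq: "?B = mask_coord i -` {b} \<inter> space ?\<Omega>" by (auto simp: J_space)
  have Bsets: "?B \<in> sets ?\<Omega>" unfolding Beq by (rule measurable_sets[OF mask_meas[OF i]]) simp
  have ind_m: "indicator ?B \<in> borel_measurable ?\<Omega>" by (rule borel_measurable_indicator[OF Bsets])
  have "measure ?J ?B = (\<integral>x. indicator ?B x \<partial>?J)"
  proof -
    have sub: "?B \<inter> space ?J = ?B" by auto
    show ?thesis by (simp only: Bochner_Integration.integral_indicator sub)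
  qed
  also have "\<dots> = (\<integral>x. (\<integral>w. indicator ?B (fst x, snd x, w) \<partial>A (select n (fst x) (snd x))) \<partial>?K)"
    by (rule J_integral[OF ind_m, where B=1]) (simp add: indicator_def)
  also have "\<dots> = (\<integral>x. (if snd x i = b then 1 else 0) \<partial>?K)"
  proof (rule Bochner_Integration.integral_cong[OF refl])
    fix x assume x: "x \<in> space ?K"
    have sp: "space (A (select n (fst x) (snd x))) = space Wsp"
      by (rule sets_eq_imp_space_eq[OF A_sel_space(2)[OF x]])
    have "(\<integral>w. indicator ?B (fst x, snd x, w) \<partial>A (select n (fst x) (snd x))) = (\<integral>w. (if snd x i = b then 1 else (0::real)) \<partial>A (select n (fst x) (snd x)))"
    proof (rule Bochner_Integration.integral_cong[OF refl])
      fix w assume w: "w \<in> space (A (select n (fst x) (snd x)))"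
      have "(\<lambda>w. (fst x, snd x, w)) \<in> measurable Wsp ?\<Omega>" by (rule pairw_meas[OF x refl])
      then have "(fst x, snd x, w) \<in> space ?\<Omega>" using w sp by (auto dest: measurable_space)
      then show "indicator ?B (fst x, snd x, w) = (if snd x i = b then 1 else (0::real))"
        by (auto simp: indicator_def J_space mask_coord_def)
    qed
    also have "\<dots> = (if snd x i = b then 1 else 0)"
      using prob_space.prob_space[OF A_sel_space(1)[OF x]] by simp
    finally show "(\<integral>w. indicator ?B (fst x, snd x, w) \<partial>A (select n (fst x) (snd x))) = (if snd x i = b then 1 else (0::real))" .
  qed
  also have "\<dots> = (\<integral>u. \<integral>zt. (if u i = b then 1 else 0) \<partial>super_space n M \<partial>mask_space n)"
  proof -
    have mu: "(\<lambda>x. snd x i) \<in> measurable ?K (count_space UNIV)"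
      by (rule measurable_compose[OF measurable_snd mask_comp_meas[OF i]])
    have ps: "{x \<in> space ?K. snd x i = b} \<in> sets ?K"
    proof -
      have "{x \<in> space ?K. snd x i = b} = (\<lambda>x. snd x i) -` {b} \<inter> space ?K" by auto
      then show ?thesis using measurable_sets[OF mu, of "{b}"] by simp
    qed
    have gm: "(\<lambda>x. if snd x i = b then 1 else 0 :: real) \<in> borel_measurable ?K"
      by (rule measurable_If[OF borel_measurable_const borel_measurable_const ps])
    show ?thesis using K_fubini[OF gm] by simp
  qed
  also have "\<dots> = (\<integral>u. (if u i = b then 1 else 0) \<partial>mask_space n)"
    using prob_space.prob_space[OF prob_space_super[OF M]] by simp
  also have "\<dots> = (\<integral>v. (if v = b then 1 else 0) \<partial>measure_pmf (pmf_of_set (UNIV :: bool set)))"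
  proof -
    have d: "distr (mask_space n) (measure_pmf (pmf_of_set (UNIV :: bool set))) (\<lambda>u. u i) = measure_pmf (pmf_of_set UNIV)"
      unfolding mask_space_def by (rule distr_PiM_component) (use i in \<open>auto intro: prob_space_measure_pmf\<close>)
    have m1: "(\<lambda>u. u i) \<in> measurable (mask_space n) (measure_pmf (pmf_of_set (UNIV :: bool set)))"
      unfolding mask_space_def by (rule measurable_component_singleton) (use i in simp)
    have "(\<integral>v. (if v = b then 1 else (0::real)) \<partial>distr (mask_space n) (measure_pmf (pmf_of_set (UNIV :: bool set))) (\<lambda>u. u i))
        = (\<integral>u. (if u i = b then 1 else 0) \<partial>mask_space n)"
      by (rule integral_distr[OF m1]) simp
    then show ?thesis unfolding d by simp
  qed
  also have "\<dots> = 1/2"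
    by (subst integral_measure_pmf_real[where A=UNIV]) (auto simp: UNIV_bool)
  finally have m: "measure ?J ?B = 1/2" .
  show ?thesis unfolding J.emeasure_eq_measure m ..
qed

end

theorem theorem5:
  fixes n :: nat and M :: "'z measure" and Wsp :: "'w measure"
    and A :: "(nat \<Rightarrow> 'z) \<Rightarrow> 'w measure" and loss :: "'w \<Rightarrow> 'z \<Rightarrow> real"
  assumes "n > 0"
    and "prob_space M"
    and "A \<in> measurable (sample_space n M) (prob_algebra Wsp)"
    and "(\<lambda>(w, z). loss w z) \<in> borel_measurable (Wsp \<Otimes>\<^sub>M M)"
    and "\<And>w z. w \<in> space Wsp \<Longrightarrow> z \<in> space M \<Longrightarrow> 0 \<le> loss w z \<and> loss w z \<le> 1"
  shows "ennreal \<bar>gen_error n M A loss\<bar> \<le>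
    ennreal (1 / real n) *
    (\<Sum>i<n. \<integral>\<^sup>+ b. wasserstein1
        (distr (uniform_measure (supersample_joint n M Wsp A)
                  {x \<in> space (supersample_joint n M Wsp A). mask_coord i x = b})
               borel (delta_loss loss i))
        (distr (supersample_joint n M Wsp A) borel (delta_loss loss i))
      \<partial>(distr (supersample_joint n M Wsp A) (count_space UNIV) (mask_coord i)))"
proof -
  interpret ss_setting n M Wsp A loss
    by (rule ss_setting.intro) (use assms in auto)
  let ?J = "supersample_joint n M Wsp A"
  define c where "c i = (\<integral>x. (if mask_coord i x then - delta_loss loss i x else delta_loss loss i x) \<partial>?J)" for i
  define R where "R i = (\<integral>\<^sup>+ b. wasserstein1
        (distr (uniform_measure ?J {x \<in> space ?J. mask_coord i x = b}) borel (delta_loss loss i))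
        (distr ?J borel (delta_loss loss i)) \<partial>(distr ?J (count_space UNIV) (mask_coord i)))" for i
  have g: "gen_error n M A loss = (\<Sum>i<n. c i) / real n" unfolding c_def by (rule J_F2)
  have cR: "ennreal \<bar>c i\<bar> \<le> R i" if i: "i < n" for i
    unfolding c_def R_def
  proof (rule cond_bound[OF J_prob])
    show "delta_loss loss i \<in> borel_measurable ?J" by (rule J_meas_cong[OF delta_meas[OF i]])
    show "\<bar>delta_loss loss i x\<bar> \<le> 1" if "x \<in> space ?J" for x
      using that by (intro delta_bound[OF _ i]) (simp add: J_space)
    show "mask_coord i \<in> measurable ?J (count_space UNIV)"
      by (subst measurable_cong_sets[OF J_sets refl]) (rule mask_meas[OF i])
    show "emeasure ?J {x \<in> space ?J. mask_coord i x = b} = ennreal (1/2)" for b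
      by (rule half[OF i])
  qed
  have np: "real n > 0" using assms(1) by simp
  have "\<bar>gen_error n M A loss\<bar> = \<bar>\<Sum>i<n. c i\<bar> / real n" unfolding g by (simp add: abs_divide)
  also have "\<dots> \<le> (\<Sum>i<n. \<bar>c i\<bar>) / real n"
    by (rule divide_right_mono[OF sum_abs]) simp
  finally have le: "ennreal \<bar>gen_error n M A loss\<bar> \<le> ennreal ((\<Sum>i<n. \<bar>c i\<bar>) / real n)"
    by (rule ennreal_leI)
  also have "ennreal ((\<Sum>i<n. \<bar>c i\<bar>) / real n) = ennreal (1 / real n) * ennreal (\<Sum>i<n. \<bar>c i\<bar>)"
    by (subst ennreal_mult[symmetric]) auto
  also have "ennreal (\<Sum>i<n. \<bar>c i\<bar>) = (\<Sum>i<n. ennreal \<bar>c i\<bar>)"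
    by (rule sum_ennreal[symmetric]) simp
  also have "ennreal (1 / real n) * (\<Sum>i<n. ennreal \<bar>c i\<bar>) \<le> ennreal (1 / real n) * (\<Sum>i<n. R i)"
    by (intro mult_left_mono sum_mono cR) auto
  finally show ?thesis unfolding R_def .
qed

end
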